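(* Let $n\ge2$ and let $G\subsetneq\mathbb{R}^n$ be a domain. Then $G$ is convex if and only if $s_G(x,y)\le p_G(x,y)$ for all $x,y\in G$.
   Context: A domain is a non-empty, open, connected set. $d_G(x)=\inf\{|x-z|:z\in\partial G\}$, $s_G(x,y)=\frac{|x-y|}{\inf_{z\in\partial G}(|x-z|+|z-y|)}$, $p_G(x,y)=\frac{|x-y|}{\sqrt{|x-y|^2+4d_G(x)d_G(y)}}$. *)

theory Defs
  imports "HOL-Analysis.Analysis"
begin

definition bdist :: "'a::euclidean_space set \<Rightarrow> 'a \<Rightarrow> real" where
  "bdist G x = (INF z\<in>frontier G. dist x z)"

definition s_metric :: "'a::euclidean_space set \<Rightarrow> 'a \<Rightarrow> 'a \<Rightarrow> real" where
  "s_metric G x y = dist x y / (INF z\<in>frontier G. dist x z + dist z y)"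

definition p_metric :: "'a::euclidean_space set \<Rightarrow> 'a \<Rightarrow> 'a \<Rightarrow> real" where
  "p_metric G x y = dist x y / sqrt ((dist x y)\<^sup>2 + 4 * bdist G x * bdist G y)"

end

theory Submission
  imports Defs
begin

lemma frontier_ne:
  fixes G :: "'a::euclidean_space set"
  assumes "G \<noteq> {}" "G \<noteq> UNIV"
  shows "frontier G \<noteq> {}"
  using connected_Int_frontier[of UNIV G] assms by auto

lemma bdist_nonneg:
  fixes G :: "'a::euclidean_space set"
  assumes "frontier G \<noteq> {}"
  shows "0 \<le> bdist G x"
  unfolding bdist_def using assms by (intro cINF_greatest) auto

lemma bdist_le:
  fixes G :: "'a::euclidean_space set"
  assumes "x \<in> G" "y \<notin> G"
  shows "bdist G x \<le> dist x y"
proof -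
  have "closed_segment x y \<inter> frontier G \<noteq> {}"
    using connected_Int_frontier[of "closed_segment x y" G] assms by auto
  then obtain w where w: "w \<in> closed_segment x y" "w \<in> frontier G" by auto
  have "dist x w \<le> dist x y" using w(1) by (metis dist_in_closed_segment dist_commute)
  moreover have "bdd_below ((\<lambda>z. dist x z) ` frontier G)"
    by (rule bdd_belowI[of _ 0]) auto
  ultimately show ?thesis unfolding bdist_def
    using w(2) by (meson cINF_lower2)
qed

lemma key_ineq:
  fixes u p q :: "'a::euclidean_space"
  assumes "norm u = 1"
  shows "- (p \<bullet> q) + 2 * (u \<bullet> p) * (u \<bullet> q) \<le> norm p * norm q"
proof -
  define r where "r = q - (2 * (u \<bullet> q)) *\<^sub>R u"
  have uu: "u \<bullet> u = 1" using assms by (simp add: dot_square_norm)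
  have "r \<bullet> r = q \<bullet> q"
    unfolding r_def by (simp add: algebra_simps inner_commute uu power2_eq_square)
  hence nr: "norm r = norm q" by (simp add: norm_eq_sqrt_inner)
  have "p \<bullet> r = p \<bullet> q - 2 * (u \<bullet> p) * (u \<bullet> q)"
    unfolding r_def by (simp add: algebra_simps inner_commute)
  moreover have "(-p) \<bullet> r \<le> norm (-p) * norm r" by (rule norm_cauchy_schwarz)
  ultimately show ?thesis using nr by simp
qed

lemma sum_ge_sqrt:
  fixes u x y z :: "'a::euclidean_space"
  assumes "norm u = 1" "0 \<le> A" "0 \<le> B" "A \<le> u \<bullet> (x - z)" "B \<le> u \<bullet> (y - z)"
  shows "sqrt ((dist x y)\<^sup>2 + 4 * A * B) \<le> dist x z + dist z y"
proof -
  define p where "p = x - z"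
  define q where "q = y - z"
  have k: "- (p \<bullet> q) + 2 * (u \<bullet> p) * (u \<bullet> q) \<le> norm p * norm q"
    by (rule key_ineq[OF assms(1)])
  have AB: "A * B \<le> (u \<bullet> p) * (u \<bullet> q)"
    using assms unfolding p_def q_def by (simp add: mult_mono)
  have d1: "(dist x y)\<^sup>2 = p \<bullet> p + q \<bullet> q - 2 * (p \<bullet> q)"
    unfolding p_def q_def dist_norm power2_norm_eq_inner
    by (simp add: algebra_simps inner_commute)
  have d2: "(dist x z + dist z y)\<^sup>2 = p \<bullet> p + q \<bullet> q + 2 * (norm p * norm q)"
    unfolding p_def q_def dist_norm
    by (simp add: power2_sum power2_norm_eq_inner[symmetric] norm_minus_commute)
  have "(dist x y)\<^sup>2 + 4 * A * B \<le> (dist x z + dist z y)\<^sup>2"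
    using k AB d1 d2 by linarith
  hence "sqrt ((dist x y)\<^sup>2 + 4 * A * B) \<le> sqrt ((dist x z + dist z y)\<^sup>2)"
    by (rule real_sqrt_le_mono)
  thus ?thesis by simp
qed

theorem theorem3p7:
  fixes G :: "'a::euclidean_space set"
  assumes "DIM('a) \<ge> 2"
    and "open G" and "connected G" and "G \<noteq> {}" and "G \<noteq> UNIV"
  shows "convex G \<longleftrightarrow> (\<forall>x\<in>G. \<forall>y\<in>G. s_metric G x y \<le> p_metric G x y)"
proof
  have fne: "frontier G \<noteq> {}" using frontier_ne assms by blast
  have fnotG: "w \<notin> G" if "w \<in> frontier G" for w
    using that \<open>open G\<close> by (simp add: frontier_def interior_open)
  have bdd2: "bdd_below ((\<lambda>z. dist x z + dist z y) ` frontier G)" for x y :: 'a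
    by (rule bdd_belowI[of _ 0]) auto
  have bpos: "0 < bdist G x" if "x \<in> G" for x
  proof -
    obtain e where e: "e > 0" "ball x e \<subseteq> G" using \<open>open G\<close> \<open>x \<in> G\<close> open_contains_ball by blast
    have "e \<le> bdist G x" unfolding bdist_def
    proof (rule cINF_greatest[OF fne])
      fix w assume "w \<in> frontier G"
      hence "w \<notin> ball x e" using fnotG e by blast
      thus "e \<le> dist x w" by simp
    qed
    thus ?thesis using e by simp
  qed
  have Ipos: "0 < (INF z\<in>frontier G. dist x z + dist z y)" if "x \<in> G" for x y
  proof -
    obtain e where e: "e > 0" "ball x e \<subseteq> G" using \<open>open G\<close> \<open>x \<in> G\<close> open_contains_ball by blast
    have "e \<le> (INF z\<in>frontier G. dist x z + dist z y)"
    proof (rule cINF_greatest[OF fne])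
      fix w assume "w \<in> frontier G"
      hence "w \<notin> ball x e" using fnotG e by blast
      thus "e \<le> dist x w + dist w y" by (simp add: add_increasing2)
    qed
    thus ?thesis using e by simp
  qed
  {
    assume cvx: "convex G"
    show "\<forall>x\<in>G. \<forall>y\<in>G. s_metric G x y \<le> p_metric G x y"
    proof (intro ballI)
      fix x y assume x: "x \<in> G" and y: "y \<in> G"
      show "s_metric G x y \<le> p_metric G x y"
      proof (cases "x = y")
        case True thus ?thesis by (simp add: s_metric_def p_metric_def)
      next
        case False
        define S where "S = sqrt ((dist x y)\<^sup>2 + 4 * bdist G x * bdist G y)"
        have S0: "0 < S" unfolding S_def using False bdist_nonneg[OF fne, of x] bdist_nonneg[OF fne, of y]
          by (intro real_sqrt_gt_zero add_pos_nonneg) auto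
        have SI: "S \<le> (INF z\<in>frontier G. dist x z + dist z y)"
        proof (rule cINF_greatest[OF fne])
          fix z assume zf: "z \<in> frontier G"
          have "0 \<notin> (\<lambda>w. w - z) ` G" using fnotG[OF zf] by auto
          moreover have "convex ((\<lambda>w. w - z) ` G)"
            using convex_translation[OF cvx, of "-z"] by (simp add: image_def)
          ultimately obtain a where a: "a \<noteq> 0" "\<forall>w\<in>(\<lambda>w. w - z) ` G. 0 \<le> inner a w"
            using separating_hyperplane_set_0 by blast
          define v where "v = a /\<^sub>R norm a"
          have nv: "norm v = 1" using a(1) unfolding v_def by simp
          have ge: "0 \<le> v \<bullet> (w - z)" if "w \<in> G" for w
            using a(2) that unfolding v_def by auto
          have gt: "0 < v \<bullet> (w - z)" if "w \<in> G" for w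
          proof (rule ccontr)
            assume "\<not> 0 < v \<bullet> (w - z)"
            hence eq: "v \<bullet> (w - z) = 0" using ge[OF that] by simp
            obtain e where e: "e > 0" "ball w e \<subseteq> G" using \<open>open G\<close> \<open>w \<in> G\<close> open_contains_ball by blast
            have "w - (e/2) *\<^sub>R v \<in> ball w e" using e nv by (simp add: dist_norm)
            hence "w - (e/2) *\<^sub>R v \<in> G" using e by blast
            from ge[OF this] have "0 \<le> v \<bullet> (w - z) - (e/2) * (v \<bullet> v)"
              by (simp add: algebra_simps)
            moreover have "v \<bullet> v = 1" using nv by (simp add: dot_square_norm)
            ultimately show False using eq e by simp
          qed
          have dle: "bdist G w \<le> v \<bullet> (w - z)" if "w \<in> G" for w
          proof -
            define t where "t = v \<bullet> (w - z)"
            have vv: "v \<bullet> v = 1" using nv by (simp add: dot_square_norm)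
            have "v \<bullet> ((w - t *\<^sub>R v) - z) = 0" unfolding t_def
              by (simp add: algebra_simps vv)
            hence "w - t *\<^sub>R v \<notin> G" using gt by force
            from bdist_le[OF that this] have "bdist G w \<le> dist w (w - t *\<^sub>R v)" .
            also have "\<dots> = t" using gt[OF that] nv unfolding t_def by (simp add: dist_norm)
            finally show ?thesis unfolding t_def .
          qed
          show "S \<le> dist x z + dist z y" unfolding S_def
            by (rule sum_ge_sqrt[OF nv bdist_nonneg[OF fne] bdist_nonneg[OF fne] dle[OF x] dle[OF y]])
        qed
        show ?thesis unfolding s_metric_def p_metric_def S_def[symmetric]
          using S0 SI by (intro divide_left_mono) auto
      qed
    qed
  }
  {
    assume H: "\<forall>x\<in>G. \<forall>y\<in>G. s_metric G x y \<le> p_metric G x y"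
    show "convex G"
    proof (rule ccontr)
      assume "\<not> convex G"
      then obtain x y where x: "x \<in> G" and y: "y \<in> G" and nsub: "\<not> closed_segment x y \<subseteq> G"
        unfolding convex_contains_segment by blast
      have "closed_segment x y \<inter> frontier G \<noteq> {}"
        using connected_Int_frontier[of "closed_segment x y" G] x nsub by auto
      then obtain z where zs: "z \<in> closed_segment x y" and zf: "z \<in> frontier G" by auto
      have xy: "x \<noteq> y" using nsub x by auto
      have btw: "between (x, y) z" using zs between_mem_segment[of x y z] by (rule iffD2[rotated])
      have "dist x y = dist x z + dist z y" using btw between[of x y z] by (rule iffD1[rotated])
      hence "dist x z + dist z y = dist x y" by (rule sym)
      have Ile: "(INF z\<in>frontier G. dist x z + dist z y) \<le> dist x y"
        by (rule cINF_lower2[OF bdd2[of x y] zf]) (use \<open>dist x z + dist z y = dist x y\<close> in simp)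
      have "1 \<le> s_metric G x y" unfolding s_metric_def
        using Ile Ipos[OF x, of y] by simp
      moreover have "p_metric G x y < 1"
      proof -
        have "0 < 4 * bdist G x * bdist G y" using bpos x y by simp
        hence "sqrt ((dist x y)\<^sup>2) < sqrt ((dist x y)\<^sup>2 + 4 * bdist G x * bdist G y)"
          by (intro real_sqrt_less_mono) simp
        hence "dist x y < sqrt ((dist x y)\<^sup>2 + 4 * bdist G x * bdist G y)" by simp
        moreover have "0 \<le> dist x y" by simp
        ultimately have "0 < sqrt ((dist x y)\<^sup>2 + 4 * bdist G x * bdist G y)" by linarith
        with \<open>dist x y < sqrt ((dist x y)\<^sup>2 + 4 * bdist G x * bdist G y)\<close>
        show ?thesis unfolding p_metric_def by (simp only: divide_less_eq_1_pos)
      qed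
      ultimately show False using H x y by force
    qed
  }
qed

end
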